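(* Consider the finite-agent foraging swarm with $n$ agents and the mean field foraging swarm, both described in the context and both using the same parameters $\rho,\varepsilon,\lambda\in(0,1)$, $r>0$. Let $\hat q(t,n)$ be the vector of agent proportions of the $n$-agent system, and let $y(t)$ be the state of the mean field system. Then for every $t\ge 0$, almost surely, $$\lim_{n\to\infty}\big(\hat q(0,n),\hat q(1,n),\dots,\hat q(t,n)\big)=\big(y(0),y(1),\dots,y(t)\big).$$ In particular, $\lim_{n\to\infty}\hat q(t,n)=y(t)$ almost surely for every $t\ge0$.
   Context: Let $\mathcal G=(\mathcal V,\mathcal E)$ be a finite, undirected, connected graph without self-loops that contains at least one cycle of odd length. Let $A$ be its adjacency matrix and $D_A$ the diagonal matrix of vertex degrees. Let $\mathcal S\neq\mathcal T\in\mathcal V$ be two vertices at graph distance greater than $1$. For $u\in\mathbb R^{\mathcal V}_{\ge 0}$, define the weight matrix $W(u)$ by $W(u)_{ij}=u_j$ if $(ij)\in\mathcal E$ and $0$ otherwise. Define the gradient matrix $P^\nabla(u)$ by $$P^\nabla(u)_{ji}=\begin{cases}1/m_i & \text{if } W(u)_{ij}=\max_l W(u)_{il},\\ 0 & \text{otherwise,}\end{cases}$$ where $m_i$ is the number of indices $l$ attaining $\max_l W(u)_{il}$. For $\varepsilon\in[0,1]$, the $\varepsilon$-greedy matrix is $P(u,\varepsilon)=\varepsilon(D_A^{-1}A)^T+(1-\varepsilon)P^\nabla(u)$, which is column stochastic. Doubled state space: vectors in $\mathbb R^{2|\mathcal V|}$ are indexed by pairs $(v,c)$ with $v\in\mathcal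 V$ and $c\in\{1,2\}$, and written in block form $z=(z^1,z^2)$. Let $S$ and $T$ be the $|\mathcal V|\times|\mathcal V|$ diagonal matrices with a single entry $1$ at $\mathcal S$ and at $\mathcal T$ respectively. For $w=(w^1,w^2)$, set $$P^f(w,\varepsilon)=\begin{pmatrix}(I-T)P(w^2,\varepsilon) & S\,P(w^1,\varepsilon)\\ T\,P(w^2,\varepsilon) & (I-S)P(w^1,\varepsilon)\end{pmatrix},$$ which is column stochastic. Let $\gamma_{(v,c)}=r$ if $v\in\{\mathcal S,\mathcal T\}$ and $0$ otherwise, and let $\Gamma=\mathrm{diag}(\gamma)$. Let $V(w)$ be the diagonal matrix with entries $V(w)_{(i,c),(i,c)}=\max_{j:(ij)\in\mathcal E}w^c_j$. The reward matrix is $R(w)=I+\Gamma+\lambda V(w)$. The function $\mathrm{sgn}$ acts componentwise, with $\mathrm{sgn}(0)=0$. Fix parameters $\rho,\varepsilon,\lambda\in(0,1)$ and $r>0$. Mean field foraging swarm: $y(0)$ is the indicator vector of $(\mathcal S,1)$, $w(0)=0$, and $$y(t+1)=P^f(w(t),\varepsilon)\,y(t),\qquad w(t+1)=(1-\rho)w(t)+\rho R(w(t))\,\mathrm{sgn}(y(t)).$$ Finite-agent foraging swarm: there are $n$ agents with positions $x_a(t)$ in the doubled index set, and all start at $x_a(0)=(\mathcal S,1)$. Write $\hat q(t,n)_{(v,c)}=\frac1n|\{a:x_a(t)=(v,c)\}|$. The weights evolve by $\hat w(0)=0$ and $\hat w(t+1)=(1-\rho)\hat w(t)+\rho R(\hat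 w(t))\,\mathrm{sgn}(\hat q(t,n))$. Given the history up to time $t$, each agent independently moves from $i$ to $j$ with probability $P^f(\hat w(t),\varepsilon)_{ji}$. *)

theory Defs
  imports "HOL-Probability.Probability"
begin

definition sym_graph :: "('v \<Rightarrow> 'v \<Rightarrow> bool) \<Rightarrow> bool" where
  "sym_graph E \<longleftrightarrow> (\<forall>i j. E i j \<longrightarrow> E j i) \<and> (\<forall>i. \<not> E i i)"

definition graph_connected :: "('v \<Rightarrow> 'v \<Rightarrow> bool) \<Rightarrow> bool" where
  "graph_connected E \<longleftrightarrow> (\<forall>u v. E\<^sup>*\<^sup>* u v)"

definition is_cycle :: "('v \<Rightarrow> 'v \<Rightarrow> bool) \<Rightarrow> 'v list \<Rightarrow> bool" where
  "is_cycle E cs \<longleftrightarrow> length cs \<ge> 3 \<and> distinct cs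
     \<and> (\<forall>k. Suc k < length cs \<longrightarrow> E (cs ! k) (cs ! Suc k))
     \<and> E (last cs) (hd cs)"

definition has_odd_cycle :: "('v \<Rightarrow> 'v \<Rightarrow> bool) \<Rightarrow> bool" where
  "has_odd_cycle E \<longleftrightarrow> (\<exists>cs. is_cycle E cs \<and> odd (length cs))"

definition deg :: "('v::finite \<Rightarrow> 'v \<Rightarrow> bool) \<Rightarrow> 'v \<Rightarrow> nat" where
  "deg E i = card {j. E i j}"

section \<open>Matrices (as functions: M j i = entry in row j, column i)\<close>

definition Wm :: "('v \<Rightarrow> 'v \<Rightarrow> bool) \<Rightarrow> ('v \<Rightarrow> real) \<Rightarrow> 'v \<Rightarrow> 'v \<Rightarrow> real" where
  "Wm E u i j = (if E i j then u j else 0)"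

text \<open>Gradient matrix: Pgrad E u j i = P^nabla(u)_{ji}; the maximum is over all l, literally.\<close>
definition Pgrad :: "('v::finite \<Rightarrow> 'v \<Rightarrow> bool) \<Rightarrow> ('v \<Rightarrow> real) \<Rightarrow> 'v \<Rightarrow> 'v \<Rightarrow> real" where
  "Pgrad E u j i =
     (let M = Max (range (Wm E u i)) in
      if Wm E u i j = M then 1 / real (card {l. Wm E u i l = M}) else 0)"

definition Peps :: "('v::finite \<Rightarrow> 'v \<Rightarrow> bool) \<Rightarrow> real \<Rightarrow> ('v \<Rightarrow> real) \<Rightarrow> 'v \<Rightarrow> 'v \<Rightarrow> real" where
  "Peps E \<epsilon> u j i = \<epsilon> * (if E i j then 1 / real (deg E i) else 0) + (1 - \<epsilon>) * Pgrad E u j i"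

datatype copy = C1 | C2

type_synonym 'v st = "'v \<times> copy"

definition blk :: "('v st \<Rightarrow> real) \<Rightarrow> copy \<Rightarrow> 'v \<Rightarrow> real" where
  "blk w c = (\<lambda>j. w (j, c))"

text \<open>Pf E S T eps w (j,c') (i,c) = entry of P^f(w,eps) in row (j,c'), column (i,c).\<close>
definition Pf :: "('v::finite \<Rightarrow> 'v \<Rightarrow> bool) \<Rightarrow> 'v \<Rightarrow> 'v \<Rightarrow> real \<Rightarrow> ('v st \<Rightarrow> real)
                   \<Rightarrow> 'v st \<Rightarrow> 'v st \<Rightarrow> real" where
  "Pf E S T \<epsilon> w x y =
     (case (x, y) of
        ((j, C1), (i, C1)) \<Rightarrow> (if j = T then 0 else 1) * Peps E \<epsilon> (blk w C2) j i
      | ((j, C1), (i, C2)) \<Rightarrow> (if j = S then 1 else 0) * Peps E \<epsilon> (blk w C1) j i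
      | ((j, C2), (i, C1)) \<Rightarrow> (if j = T then 1 else 0) * Peps E \<epsilon> (blk w C2) j i
      | ((j, C2), (i, C2)) \<Rightarrow> (if j = S then 0 else 1) * Peps E \<epsilon> (blk w C1) j i)"

definition gam :: "'v \<Rightarrow> 'v \<Rightarrow> real \<Rightarrow> 'v st \<Rightarrow> real" where
  "gam S T r x = (if fst x = S \<or> fst x = T then r else 0)"

definition Vd :: "('v \<Rightarrow> 'v \<Rightarrow> bool) \<Rightarrow> ('v st \<Rightarrow> real) \<Rightarrow> 'v st \<Rightarrow> real" where
  "Vd E w x = Max {w (j, snd x) | j. E (fst x) j}"

text \<open>Diagonal reward matrix R(w) = I + Gamma + lambda V(w), as its diagonal.\<close>
definition Rd :: "('v \<Rightarrow> 'v \<Rightarrow> bool) \<Rightarrow> 'v \<Rightarrow> 'v \<Rightarrow> real \<Rightarrow> real \<Rightarrow> ('v st \<Rightarrow> real) \<Rightarrow> 'v st \<Rightarrow> real" where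
  "Rd E S T r lam w x = 1 + gam S T r x + lam * Vd E w x"

primrec wtraj :: "('v \<Rightarrow> 'v \<Rightarrow> bool) \<Rightarrow> 'v \<Rightarrow> 'v \<Rightarrow> real \<Rightarrow> real \<Rightarrow> real
                   \<Rightarrow> (nat \<Rightarrow> 'v st \<Rightarrow> real) \<Rightarrow> nat \<Rightarrow> 'v st \<Rightarrow> real" where
  "wtraj E S T r lam \<rho> q 0 = (\<lambda>x. 0)"
| "wtraj E S T r lam \<rho> q (Suc t) =
     (\<lambda>x. (1 - \<rho>) * wtraj E S T r lam \<rho> q t x
          + \<rho> * Rd E S T r lam (wtraj E S T r lam \<rho> q t) x * sgn (q t x))"

text \<open>Returns the pair (y(t), w(t)).\<close>
primrec mf :: "('v::finite \<Rightarrow> 'v \<Rightarrow> bool) \<Rightarrow> 'v \<Rightarrow> 'v \<Rightarrow> real \<Rightarrow> real \<Rightarrow> real \<Rightarrow> real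
               \<Rightarrow> nat \<Rightarrow> ('v st \<Rightarrow> real) \<times> ('v st \<Rightarrow> real)" where
  "mf E S T r lam \<rho> \<epsilon> 0 = ((\<lambda>x. if x = (S, C1) then 1 else 0), (\<lambda>x. 0))"
| "mf E S T r lam \<rho> \<epsilon> (Suc t) =
     (let (y, w) = mf E S T r lam \<rho> \<epsilon> t in
       ((\<lambda>x. \<Sum>z\<in>UNIV. Pf E S T \<epsilon> w x z * y z),
        (\<lambda>x. (1 - \<rho>) * w x + \<rho> * Rd E S T r lam w x * sgn (y x))))"

definition mf_y where "mf_y E S T r lam \<rho> \<epsilon> t = fst (mf E S T r lam \<rho> \<epsilon> t)"

text \<open>Empirical proportions of a history h (agent a, time s) with n agents.\<close>
definition qemp :: "nat \<Rightarrow> (nat \<Rightarrow> nat \<Rightarrow> 'v st) \<Rightarrow> nat \<Rightarrow> 'v st \<Rightarrow> real" where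
  "qemp n h s x = real (card {a. a < n \<and> h a s = x}) / real n"

text \<open>Joint law of the n-agent system: probability of the path history h on times 0..t,
  i.e. all agents start at (S,1), and given the history agents move independently
  with transition probabilities Pf(what(s)), what computed from the empirical proportions.\<close>
definition path_prob :: "('v::finite \<Rightarrow> 'v \<Rightarrow> bool) \<Rightarrow> 'v \<Rightarrow> 'v \<Rightarrow> real \<Rightarrow> real \<Rightarrow> real \<Rightarrow> real
                          \<Rightarrow> nat \<Rightarrow> nat \<Rightarrow> (nat \<Rightarrow> nat \<Rightarrow> 'v st) \<Rightarrow> real" where
  "path_prob E S T r lam \<rho> \<epsilon> n t h =
     (\<Prod>a<n. (if h a 0 = (S, C1) then 1 else 0) *
        (\<Prod>s<t. Pf E S T \<epsilon> (wtraj E S T r lam \<rho> (qemp n h) s) (h a (Suc s)) (h a s)))"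

text \<open>X n a s is the position of agent a (a < n) at time s in the n-agent system,
  all systems (n = 0,1,2,...) living on a common probability space M.\<close>
definition is_foraging_swarm ::
  "'a measure \<Rightarrow> ('v::finite \<Rightarrow> 'v \<Rightarrow> bool) \<Rightarrow> 'v \<Rightarrow> 'v \<Rightarrow> real \<Rightarrow> real \<Rightarrow> real \<Rightarrow> real
    \<Rightarrow> (nat \<Rightarrow> nat \<Rightarrow> nat \<Rightarrow> 'a \<Rightarrow> 'v st) \<Rightarrow> bool" where
  "is_foraging_swarm M E S T r lam \<rho> \<epsilon> X \<longleftrightarrow>
     (\<forall>n a s. X n a s \<in> measurable M (count_space UNIV)) \<and>
     (\<forall>n t h. measure M {\<omega> \<in> space M. \<forall>a<n. \<forall>s\<le>t. X n a s \<omega> = h a s}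
                = path_prob E S T r lam \<rho> \<epsilon> n t h)"

definition qhat :: "(nat \<Rightarrow> nat \<Rightarrow> nat \<Rightarrow> 'a \<Rightarrow> 'v st) \<Rightarrow> nat \<Rightarrow> nat \<Rightarrow> 'a \<Rightarrow> 'v st \<Rightarrow> real" where
  "qhat X n t \<omega> = qemp n (\<lambda>a s. X n a s \<omega>) t"

end

theory Submission
  imports Defs
begin


instance copy :: finite
proof
  have "(UNIV :: copy set) = {C1, C2}" by (auto intro: copy.exhaust)
  then show "finite (UNIV :: copy set)" by (metis finite.insertI finite.emptyI)
qed

lemma UNIV_copy: "(UNIV :: copy set) = {C1, C2}" by (auto intro: copy.exhaust)

lemma sum_st: "(\<Sum>x\<in>(UNIV :: ('v::finite) st set). f x) = (\<Sum>j\<in>UNIV. f (j, C1) + f (j, C2))"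
proof -
  have "(\<Sum>x\<in>(UNIV :: 'v st set). f x) = (\<Sum>x\<in>(UNIV :: 'v set) \<times> (UNIV :: copy set). f x)"
    by (simp add: UNIV_Times_UNIV)
  also have "\<dots> = (\<Sum>j\<in>UNIV. \<Sum>c\<in>UNIV. f (j, c))" by (simp add: sum.cartesian_product case_prod_unfold)
  also have "\<dots> = (\<Sum>j\<in>UNIV. f (j, C1) + f (j, C2))" by (simp add: UNIV_copy)
  finally show ?thesis .
qed

lemma mf_y_0: "mf_y E S T r lam \<rho> \<epsilon> 0 = (\<lambda>x. if x = (S, C1) then 1 else 0)"
  by (simp add: mf_y_def)

lemma mf_y_Suc: "mf_y E S T r lam \<rho> \<epsilon> (Suc t) =
   (\<lambda>x. \<Sum>z\<in>UNIV. Pf E S T \<epsilon> (snd (mf E S T r lam \<rho> \<epsilon> t)) x z * mf_y E S T r lam \<rho> \<epsilon> t z)"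
  by (simp add: mf_y_def Let_def case_prod_unfold)

lemma mw_Suc: "snd (mf E S T r lam \<rho> \<epsilon> (Suc t)) =
   (\<lambda>x. (1 - \<rho>) * snd (mf E S T r lam \<rho> \<epsilon> t) x + \<rho> * Rd E S T r lam (snd (mf E S T r lam \<rho> \<epsilon> t)) x * sgn (mf_y E S T r lam \<rho> \<epsilon> t x))"
  by (simp add: mf_y_def Let_def case_prod_unfold)

lemma mw_wtraj: "snd (mf E S T r lam \<rho> \<epsilon> t) = wtraj E S T r lam \<rho> (mf_y E S T r lam \<rho> \<epsilon>) t"
proof (induction t)
  case 0 then show ?case by simp
next
  case (Suc t) show ?case unfolding mw_Suc wtraj.simps Suc[symmetric] ..
qed

lemma wtraj_cong: "(\<And>j x. j < i \<Longrightarrow> sgn (q j x) = sgn (q' j x)) \<Longrightarrow>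
   wtraj E S T r lam \<rho> q i = wtraj E S T r lam \<rho> q' i"
  by (induction i) auto

lemma Pgrad_nonneg: "0 \<le> Pgrad E u j i"
  by (simp add: Pgrad_def Let_def)

lemma Pgrad_sum: "(\<Sum>j\<in>UNIV. Pgrad E u j i) = 1"
proof -
  define Mx where "Mx = Max (range (Wm E u i))"
  have "Mx \<in> range (Wm E u i)" unfolding Mx_def by (rule Max_in) auto
  then have ne: "{l. Wm E u i l = Mx} \<noteq> {}" by auto
  have "(\<Sum>j\<in>UNIV. Pgrad E u j i) = (\<Sum>j\<in>UNIV. if Wm E u i j = Mx then 1 / real (card {l. Wm E u i l = Mx}) else 0)"
    unfolding Pgrad_def Let_def Mx_def by simp
  also have "\<dots> = real (card {l. Wm E u i l = Mx}) * (1 / real (card {l. Wm E u i l = Mx}))"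
    by (simp add: sum.If_cases)
  also have "\<dots> = 1" using ne by (simp add: card_eq_0_iff)
  finally show ?thesis .
qed

lemma Peps_nonneg: "0 \<le> \<epsilon> \<Longrightarrow> \<epsilon> \<le> 1 \<Longrightarrow> 0 \<le> Peps E \<epsilon> u j i"
  unfolding Peps_def using Pgrad_nonneg[of E u j i] by auto

lemma Peps_sum: assumes "deg E i > 0" shows "(\<Sum>j\<in>UNIV. Peps E \<epsilon> u j i) = 1"
proof -
  have "(\<Sum>j\<in>UNIV. Peps E \<epsilon> u j i) = \<epsilon> * (\<Sum>j\<in>UNIV. (if E i j then 1 / real (deg E i) else 0)) + (1 - \<epsilon>) * (\<Sum>j\<in>UNIV. Pgrad E u j i)"
    by (simp add: Peps_def sum.distrib sum_distrib_left)
  also have "(\<Sum>j\<in>UNIV. (if E i j then 1 / real (deg E i) else 0)) = 1"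
    using assms by (simp add: sum.If_cases deg_def card_gt_0_iff)
  finally show ?thesis by (simp add: Pgrad_sum)
qed

lemma Pf_nonneg: "0 \<le> \<epsilon> \<Longrightarrow> \<epsilon> \<le> 1 \<Longrightarrow> 0 \<le> Pf E S T \<epsilon> w x z"
  unfolding Pf_def using Peps_nonneg
  by (auto split: prod.split copy.split)

lemma Pf_sum: assumes "\<And>i. deg E i > 0" shows "(\<Sum>x\<in>UNIV. Pf E S T \<epsilon> w x z) = 1"
proof -
  obtain i c where z: "z = (i, c)" by (cases z)
  show ?thesis
  proof (cases c)
    case C1
    have "(\<Sum>x\<in>UNIV. Pf E S T \<epsilon> w x z) = (\<Sum>j\<in>UNIV. Peps E \<epsilon> (blk w C2) j i)"
      by (subst sum_st) (auto simp: z C1 Pf_def intro!: sum.cong)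
    also have "\<dots> = 1" by (rule Peps_sum[OF assms])
    finally show ?thesis .
  next
    case C2
    have "(\<Sum>x\<in>UNIV. Pf E S T \<epsilon> w x z) = (\<Sum>j\<in>UNIV. Peps E \<epsilon> (blk w C1) j i)"
      by (subst sum_st) (auto simp: z C2 Pf_def intro!: sum.cong)
    also have "\<dots> = 1" by (rule Peps_sum[OF assms])
    finally show ?thesis .
  qed
qed

lemma deg_pos:
  fixes E :: "'v::finite \<Rightarrow> 'v \<Rightarrow> bool"
  assumes "graph_connected E" "(S::'v) \<noteq> T"
  shows "deg E i > 0"
proof -
  obtain j where "j \<noteq> i" using assms(2) by (cases "i = S") (metis, metis)
  moreover have "E\<^sup>*\<^sup>* i j" using assms(1) by (simp add: graph_connected_def)
  ultimately obtain k where "E i k" by (metis converse_rtranclpE)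
  then have "{j. E i j} \<noteq> {}" by auto
  then show ?thesis by (simp add: deg_def card_gt_0_iff)
qed



definition pathw :: "(nat \<Rightarrow> 'b \<Rightarrow> 'b \<Rightarrow> real) \<Rightarrow> 'b \<Rightarrow> nat \<Rightarrow> (nat \<Rightarrow> 'b) \<Rightarrow> real" where
  "pathw K x0 s p = (if p 0 = x0 then 1 else 0) * (\<Prod>i<s. K i (p (Suc i)) (p i))"

primrec ydist :: "(nat \<Rightarrow> 'b \<Rightarrow> 'b \<Rightarrow> real) \<Rightarrow> 'b \<Rightarrow> nat \<Rightarrow> 'b \<Rightarrow> real" where
  "ydist K x0 0 = (\<lambda>x. if x = x0 then 1 else 0)"
| "ydist K x0 (Suc s) = (\<lambda>x. \<Sum>z\<in>UNIV. K s x z * ydist K x0 s z)"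

lemma pathw_upd: "pathw K x0 (Suc s) (g(Suc s := x)) = pathw K x0 s g * K s x (g s)"
proof -
  have "(\<Prod>i<s. K i ((g(Suc s := x)) (Suc i)) ((g(Suc s := x)) i)) = (\<Prod>i<s. K i (g (Suc i)) (g i))"
    by (intro prod.cong) auto
  then show ?thesis by (simp add: pathw_def)
qed

lemma marg:
  fixes K :: "nat \<Rightarrow> 'b::finite \<Rightarrow> 'b \<Rightarrow> real"
  shows "(\<Sum>p\<in>PiE {..s} (\<lambda>_. UNIV). pathw K x0 s p * f (p s)) = (\<Sum>x\<in>UNIV. ydist K x0 s x * f x)"
proof (induction s arbitrary: f)
  case 0
  have "(\<Sum>p\<in>PiE {..0} (\<lambda>_. UNIV). pathw K x0 0 p * f (p 0)) = (\<Sum>x\<in>UNIV. (if x = x0 then 1 else 0) * f x)"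
    by (rule sum.reindex_bij_witness[of _ "\<lambda>x. (\<lambda>i\<in>{..0}. x)" "\<lambda>p. p 0"])
       (auto simp: pathw_def PiE_def extensional_def)
  then show ?case by simp
next
  case (Suc s)
  have "(\<Sum>p\<in>PiE {..Suc s} (\<lambda>_. UNIV). pathw K x0 (Suc s) p * f (p (Suc s)))
      = (\<Sum>(x,g)\<in>UNIV \<times> PiE {..s} (\<lambda>_. UNIV). pathw K x0 s g * K s x (g s) * f x)"
    by (rule sum.reindex_bij_witness[of _ "\<lambda>(x,g). g(Suc s := x)" "\<lambda>p. (p (Suc s), p(Suc s := undefined))"])
       (auto simp: PiE_def extensional_def pathw_upd[symmetric] fun_upd_idem)
  also have "\<dots> = (\<Sum>x\<in>UNIV. \<Sum>g\<in>PiE {..s} (\<lambda>_. UNIV). pathw K x0 s g * K s x (g s) * f x)"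
    by (simp add: sum.cartesian_product)
  also have "\<dots> = (\<Sum>g\<in>PiE {..s} (\<lambda>_. UNIV). pathw K x0 s g * (\<Sum>x\<in>UNIV. K s x (g s) * f x))"
    by (subst sum.swap) (simp add: sum_distrib_left mult.assoc)
  also have "\<dots> = (\<Sum>z\<in>UNIV. ydist K x0 s z * (\<Sum>x\<in>UNIV. K s x z * f x))"
    by (rule Suc.IH)
  also have "\<dots> = (\<Sum>x\<in>UNIV. ydist K x0 (Suc s) x * f x)"
    by (simp add: sum_distrib_left sum_distrib_right mult_ac) (rule sum.swap)
  finally show ?case .
qed

lemma pathw_nonneg: "(\<And>i x z. 0 \<le> K i x z) \<Longrightarrow> 0 \<le> pathw K x0 s p"
  unfolding pathw_def by (auto intro: prod_nonneg)

lemma prod_if_pow: "finite I \<Longrightarrow> (\<Prod>a\<in>I. if A a then c else (1::real)) = c ^ card {a\<in>I. A a}"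
  by (simp add: prod.If_cases Int_def conj_commute)

lemma chernoff:
  fixes \<pi> :: "'p \<Rightarrow> real" and P :: "'p set"
  assumes fin: "finite P" and nn: "\<And>p. p \<in> P \<Longrightarrow> 0 \<le> \<pi> p" and s1: "sum \<pi> P = 1" and l: "0 \<le> l"
  shows "(\<Sum>h\<in>PiE {..<n} (\<lambda>_. P). (\<Prod>a<n. \<pi> (h a)) * (if k \<le> real (card {a. a < n \<and> A (h a)}) then 1 else 0))
     \<le> exp (- l * k) * (1 - (\<Sum>p\<in>P. \<pi> p * (if A p then 1 else 0)) + (\<Sum>p\<in>P. \<pi> p * (if A p then 1 else 0)) * exp l) ^ n"
proof -
  define g where "g p = (if A p then exp l else 1)" for p
  have "(\<Sum>h\<in>PiE {..<n} (\<lambda>_. P). (\<Prod>a<n. \<pi> (h a)) * (if k \<le> real (card {a. a < n \<and> A (h a)}) then 1 else 0))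
     \<le> (\<Sum>h\<in>PiE {..<n} (\<lambda>_. P). (\<Prod>a<n. \<pi> (h a)) * (exp (- l * k) * (\<Prod>a<n. g (h a))))"
  proof (rule sum_mono)
    fix h assume h: "h \<in> PiE {..<n} (\<lambda>_. P)"
    have pn: "0 \<le> (\<Prod>a<n. \<pi> (h a))" using h nn by (auto intro!: prod_nonneg)
    have "(\<Prod>a<n. g (h a)) = exp l ^ card {a\<in>{..<n}. A (h a)}"
      unfolding g_def by (rule prod_if_pow) simp
    also have "\<dots> = exp (real (card {a. a < n \<and> A (h a)}) * l)"
      by (simp add: exp_of_nat_mult[symmetric])
    finally have eq: "(\<Prod>a<n. g (h a)) = exp (real (card {a. a < n \<and> A (h a)}) * l)" .
    have "(if k \<le> real (card {a. a < n \<and> A (h a)}) then 1 else 0) \<le> exp (- l * k) * (\<Prod>a<n. g (h a))"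
    proof (cases "k \<le> real (card {a. a < n \<and> A (h a)})")
      case True
      have "exp (- l * k) * exp (real (card {a. a < n \<and> A (h a)}) * l) = exp (l * (real (card {a. a < n \<and> A (h a)}) - k))"
        by (simp add: exp_add[symmetric] algebra_simps)
      moreover have "1 \<le> exp (l * (real (card {a. a < n \<and> A (h a)}) - k))"
        using True l by simp
      ultimately show ?thesis using True eq by simp
    qed (simp add: g_def prod_nonneg)
    then show "(\<Prod>a<n. \<pi> (h a)) * (if k \<le> real (card {a. a < n \<and> A (h a)}) then 1 else 0)
      \<le> (\<Prod>a<n. \<pi> (h a)) * (exp (- l * k) * (\<Prod>a<n. g (h a)))"
      using pn by (rule mult_left_mono)
  qed
  also have "\<dots> = exp (- l * k) * (\<Sum>h\<in>PiE {..<n} (\<lambda>_. P). \<Prod>a<n. \<pi> (h a) * g (h a))"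
    by (simp add: sum_distrib_left prod.distrib mult_ac)
  also have "(\<Sum>h\<in>PiE {..<n} (\<lambda>_. P). \<Prod>a<n. \<pi> (h a) * g (h a)) = (\<Prod>a<n. \<Sum>p\<in>P. \<pi> p * g p)"
    by (rule prod_sum_PiE[symmetric]) (use fin in auto)
  also have "\<dots> = (\<Sum>p\<in>P. \<pi> p * g p) ^ n" by simp
  also have "(\<Sum>p\<in>P. \<pi> p * g p) = 1 - (\<Sum>p\<in>P. \<pi> p * (if A p then 1 else 0)) + (\<Sum>p\<in>P. \<pi> p * (if A p then 1 else 0)) * exp l"
  proof -
    have "(\<Sum>p\<in>P. \<pi> p * g p) = (\<Sum>p\<in>P. \<pi> p - \<pi> p * (if A p then 1 else 0) + \<pi> p * (if A p then 1 else 0) * exp l)"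
      by (intro sum.cong) (auto simp: g_def)
    also have "\<dots> = sum \<pi> P - (\<Sum>p\<in>P. \<pi> p * (if A p then 1 else 0)) + (\<Sum>p\<in>P. \<pi> p * (if A p then 1 else 0)) * exp l"
      by (simp add: sum.distrib sum_subtractf sum_distrib_right)
    finally show ?thesis using s1 by simp
  qed
  finally show ?thesis .
qed



lemma chern_num:
  fixes q \<delta> :: real
  assumes q: "0 \<le> q" "q \<le> 1" and d: "0 < \<delta>" "\<delta> \<le> 1"
  shows "exp (- (\<delta>/2) * (real n * (q + \<delta>))) * (1 - q + q * exp (\<delta>/2)) ^ n \<le> exp (- \<delta>\<^sup>2 / 4) ^ n"
proof -
  define l where "l = \<delta>/2"
  have l: "0 \<le> l" "l \<le> 1" using d by (auto simp: l_def)
  have "exp l \<le> 1 + l + l\<^sup>2" using exp_bound l by auto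
  then have "1 - q + q * exp l \<le> 1 + q * (l + l\<^sup>2)"
    using q mult_left_mono[of "exp l" "1 + l + l\<^sup>2" q] by (simp add: algebra_simps)
  also have "\<dots> \<le> exp (q * (l + l\<^sup>2))" by (rule exp_ge_add_one_self)
  finally have b: "1 - q + q * exp l \<le> exp (q * (l + l\<^sup>2))" .
  have pos: "0 \<le> 1 - q + q * exp l" using q by (simp add: add_nonneg_nonneg)
  have "(1 - q + q * exp l) ^ n \<le> exp (q * (l + l\<^sup>2)) ^ n" by (rule power_mono[OF b pos])
  also have "\<dots> = exp (real n * (q * (l + l\<^sup>2)))" by (simp add: exp_of_nat_mult[symmetric])
  finally have "exp (- l * (real n * (q + \<delta>))) * (1 - q + q * exp l) ^ n
      \<le> exp (- l * (real n * (q + \<delta>))) * exp (real n * (q * (l + l\<^sup>2)))" by simp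
  also have "\<dots> = exp (real n * (q * l\<^sup>2 - l * \<delta>))"
    by (simp add: exp_add[symmetric] algebra_simps)
  also have "\<dots> \<le> exp (real n * (l\<^sup>2 - l * \<delta>))"
  proof -
    have "q * l\<^sup>2 \<le> l\<^sup>2" using q by (simp add: mult_left_le_one_le)
    then show ?thesis by (simp add: mult_left_mono)
  qed
  also have "\<dots> = exp (- \<delta>\<^sup>2 / 4) ^ n"
    by (simp add: exp_of_nat_mult[symmetric] l_def power2_eq_square algebra_simps)
  finally show ?thesis by (simp add: l_def)
qed

lemma card_compl_lt: "card {a. a < n \<and> A a} + card {a. a < n \<and> \<not> A a} = n"
proof -
  have "{..<n} = {a. a < n \<and> A a} \<union> {a. a < n \<and> \<not> A a}" by auto
  then have "card {..<n} = card ({a. a < n \<and> A a} \<union> {a. a < n \<and> \<not> A a})" by simp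
  also have "\<dots> = card {a. a < n \<and> A a} + card {a. a < n \<and> \<not> A a}"
    by (rule card_Un_disjoint) auto
  finally show ?thesis by simp
qed

lemma deviation:
  fixes \<pi> :: "'p \<Rightarrow> real" and P :: "'p set"
  assumes fin: "finite P" and nn: "\<And>p. p \<in> P \<Longrightarrow> 0 \<le> \<pi> p" and s1: "sum \<pi> P = 1"
    and d: "0 < \<delta>" "\<delta> \<le> 1"
  shows "(\<Sum>h\<in>PiE {..<n} (\<lambda>_. P). (\<Prod>a<n. \<pi> (h a)) *
      (if \<delta> \<le> \<bar>real (card {a. a < n \<and> A (h a)}) / real n - (\<Sum>p\<in>P. \<pi> p * (if A p then 1 else 0))\<bar> then 1 else 0))
     \<le> 2 * exp (- \<delta>\<^sup>2 / 4) ^ n"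
proof -
  define pA where "pA = (\<Sum>p\<in>P. \<pi> p * (if A p then 1 else 0))"
  define pB where "pB = (\<Sum>p\<in>P. \<pi> p * (if \<not> A p then 1 else 0))"
  have pApB: "pA + pB = 1"
  proof -
    have "pA + pB = (\<Sum>p\<in>P. \<pi> p)"
      unfolding pA_def pB_def sum.distrib[symmetric] by (intro sum.cong) auto
    then show ?thesis using s1 by simp
  qed
  have pA0: "0 \<le> pA" unfolding pA_def using nn by (auto intro: sum_nonneg)
  have pB0: "0 \<le> pB" unfolding pB_def using nn by (auto intro: sum_nonneg)
  let ?Q = "\<lambda>h. (\<Prod>a<n. \<pi> (h a))"
  let ?c = "\<lambda>h. card {a. a < n \<and> A (h a)}"
  let ?c' = "\<lambda>h. card {a. a < n \<and> \<not> A (h a)}"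
  have "(\<Sum>h\<in>PiE {..<n} (\<lambda>_. P). ?Q h * (if \<delta> \<le> \<bar>real (?c h) / real n - pA\<bar> then 1 else 0))
     \<le> (\<Sum>h\<in>PiE {..<n} (\<lambda>_. P). ?Q h * (if real n * (pA + \<delta>) \<le> real (?c h) then 1 else 0)
          + ?Q h * (if real n * (pB + \<delta>) \<le> real (?c' h) then 1 else 0))"
  proof (rule sum_mono)
    fix h assume h: "h \<in> PiE {..<n} (\<lambda>_. P)"
    have pn: "0 \<le> ?Q h" using h nn by (auto intro!: prod_nonneg)
    have cc: "real (?c' h) = real n - real (?c h)"
      using card_compl_lt[of n "\<lambda>a. A (h a)"] by linarith
    have "(if \<delta> \<le> \<bar>real (?c h) / real n - pA\<bar> then 1 else 0)
      \<le> (if real n * (pA + \<delta>) \<le> real (?c h) then 1 else 0) + (if real n * (pB + \<delta>) \<le> real (?c' h) then 1 else (0::real))"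
    proof (cases "n = 0")
      case True then show ?thesis by simp
    next
      case False
      then have np: "real n > 0" by simp
      show ?thesis
      proof (cases "\<delta> \<le> \<bar>real (?c h) / real n - pA\<bar>")
        case True
        then consider "\<delta> \<le> real (?c h) / real n - pA" | "\<delta> \<le> pA - real (?c h) / real n" by linarith
        then have "real n * (pA + \<delta>) \<le> real (?c h) \<or> real n * (pB + \<delta>) \<le> real (?c' h)"
        proof cases
          case 1
          then have "pA + \<delta> \<le> real (?c h) / real n" by simp
          then have "real n * (pA + \<delta>) \<le> real (?c h)" using np by (simp add: field_simps)
          then show ?thesis by simp
        next
          case 2
          then have "real (?c h) / real n \<le> pA - \<delta>" by simp
          then have "real (?c h) \<le> real n * (pA - \<delta>)" using np by (simp add: field_simps)
          moreover have "real n * (pB + \<delta>) = real n * (pA + pB) - real n * pA + real n * \<delta>" by (simp add: algebra_simps)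
          then have "real n * (pB + \<delta>) = real n - real n * pA + real n * \<delta>" using pApB by simp
          ultimately have "real n * (pB + \<delta>) \<le> real (?c' h)" using cc by (simp add: algebra_simps)
          then show ?thesis by simp
        qed
        then show ?thesis by auto
      qed simp
    qed
    then have "?Q h * (if \<delta> \<le> \<bar>real (?c h) / real n - pA\<bar> then 1 else 0)
      \<le> ?Q h * ((if real n * (pA + \<delta>) \<le> real (?c h) then 1 else 0) + (if real n * (pB + \<delta>) \<le> real (?c' h) then 1 else (0::real)))"
      by (rule mult_left_mono[OF _ pn])
    then show "?Q h * (if \<delta> \<le> \<bar>real (?c h) / real n - pA\<bar> then 1 else 0)
      \<le> ?Q h * (if real n * (pA + \<delta>) \<le> real (?c h) then 1 else 0)
          + ?Q h * (if real n * (pB + \<delta>) \<le> real (?c' h) then 1 else 0)"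
      by (simp only: distrib_left)
  qed
  also have "\<dots> = (\<Sum>h\<in>PiE {..<n} (\<lambda>_. P). ?Q h * (if real n * (pA + \<delta>) \<le> real (?c h) then 1 else 0))
     + (\<Sum>h\<in>PiE {..<n} (\<lambda>_. P). ?Q h * (if real n * (pB + \<delta>) \<le> real (?c' h) then 1 else 0))"
    by (rule sum.distrib)
  also have "\<dots> \<le> exp (- \<delta>\<^sup>2 / 4) ^ n + exp (- \<delta>\<^sup>2 / 4) ^ n"
  proof (rule add_mono)
    have "(\<Sum>h\<in>PiE {..<n} (\<lambda>_. P). ?Q h * (if real n * (pA + \<delta>) \<le> real (?c h) then 1 else 0))
      \<le> exp (- (\<delta>/2) * (real n * (pA + \<delta>))) * (1 - pA + pA * exp (\<delta>/2)) ^ n"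
      unfolding pA_def by (rule chernoff[OF fin nn s1]) (use d in auto)
    also have "\<dots> \<le> exp (- \<delta>\<^sup>2 / 4) ^ n"
      by (rule chern_num) (use pA0 pB0 pApB d in auto)
    finally show "(\<Sum>h\<in>PiE {..<n} (\<lambda>_. P). ?Q h * (if real n * (pA + \<delta>) \<le> real (?c h) then 1 else 0))
      \<le> exp (- \<delta>\<^sup>2 / 4) ^ n" .
  next
    have "(\<Sum>h\<in>PiE {..<n} (\<lambda>_. P). ?Q h * (if real n * (pB + \<delta>) \<le> real (?c' h) then 1 else 0))
      \<le> exp (- (\<delta>/2) * (real n * (pB + \<delta>))) * (1 - pB + pB * exp (\<delta>/2)) ^ n"
      unfolding pB_def by (rule chernoff[OF fin nn s1, where A="\<lambda>p. \<not> A p"]) (use d in auto)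
    also have "\<dots> \<le> exp (- \<delta>\<^sup>2 / 4) ^ n"
      by (rule chern_num) (use pA0 pB0 pApB d in auto)
    finally show "(\<Sum>h\<in>PiE {..<n} (\<lambda>_. P). ?Q h * (if real n * (pB + \<delta>) \<le> real (?c' h) then 1 else 0))
      \<le> exp (- \<delta>\<^sup>2 / 4) ^ n" .
  qed
  finally show ?thesis unfolding pA_def by simp
qed



lemma qemp_cong: "(\<And>a. a < n \<Longrightarrow> h a s = h' a s) \<Longrightarrow> qemp n h s = qemp n h' s"
  unfolding qemp_def by (intro ext) (metis (mono_tags, lifting) Collect_cong)

definition Gd :: "(nat \<Rightarrow> 'b st \<Rightarrow> real) \<Rightarrow> nat \<Rightarrow> real \<Rightarrow> nat \<Rightarrow> (nat \<Rightarrow> nat \<Rightarrow> 'b st) \<Rightarrow> bool" where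
  "Gd y n \<delta> s h = (\<forall>x. \<bar>qemp n h s x - y s x\<bar> < \<delta> \<and> sgn (qemp n h s x) = sgn (y s x))"

lemma Gd_cong: "(\<And>a. a < n \<Longrightarrow> h a s = h' a s) \<Longrightarrow> Gd y n \<delta> s h = Gd y n \<delta> s h'"
  unfolding Gd_def using qemp_cong[of n h s h'] by simp

context
  fixes E :: "'v::finite \<Rightarrow> 'v \<Rightarrow> bool" and S T :: 'v and r lam \<rho> \<epsilon> :: real
    and M :: "'a measure" and X :: "nat \<Rightarrow> nat \<Rightarrow> nat \<Rightarrow> 'a \<Rightarrow> 'v st"
  assumes conn: "graph_connected E" and ST: "S \<noteq> T" and eps: "0 < \<epsilon>" "\<epsilon> < 1"
    and PS: "prob_space M" and sw: "is_foraging_swarm M E S T r lam \<rho> \<epsilon> X"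
begin

abbreviation "yy \<equiv> mf_y E S T r lam \<rho> \<epsilon>"
abbreviation "KK \<equiv> (\<lambda>i. Pf E S T \<epsilon> (snd (mf E S T r lam \<rho> \<epsilon> i)))"

lemma y_ydist: "yy s = ydist KK (S, C1) s"
  by (induction s) (simp_all add: mf_y_0 mf_y_Suc)

lemma KK_nonneg: "0 \<le> KK i x z"
  using eps by (intro Pf_nonneg) auto

lemma KK_sum: "(\<Sum>x\<in>UNIV. KK i x z) = 1"
  by (rule Pf_sum) (rule deg_pos[OF conn ST])

lemma ydist_sum: "(\<Sum>x\<in>UNIV. ydist KK (S, C1) s x) = 1"
proof (induction s)
  case 0 then show ?case by simp
next
  case (Suc s)
  have "(\<Sum>x\<in>UNIV. ydist KK (S, C1) (Suc s) x) = (\<Sum>z\<in>UNIV. ydist KK (S, C1) s z * (\<Sum>x\<in>UNIV. KK s x z))"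
    by (simp add: sum_distrib_left sum_distrib_right mult_ac) (rule sum.swap)
  also have "\<dots> = 1" using Suc by (simp add: KK_sum)
  finally show ?case .
qed

lemma pathw_sum1: "(\<Sum>p\<in>PiE {..s} (\<lambda>_. UNIV). pathw KK (S, C1) s p) = 1"
  using marg[of KK "(S, C1)" s "\<lambda>_. 1"] ydist_sum[of s] by simp

lemma pathw_marg: "(\<Sum>p\<in>PiE {..s} (\<lambda>_. UNIV). pathw KK (S, C1) s p * (if p s = x then 1 else 0)) = yy s x"
  using marg[of KK "(S, C1)" s "\<lambda>z. if z = x then 1 else 0"] by (simp add: y_ydist mult.commute[of _ "if _ then _ else _"] if_distrib cong: if_cong)

lemma pathw_nn: "0 \<le> pathw KK (S, C1) s p"
  by (rule pathw_nonneg) (rule KK_nonneg)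

lemma yy_nonneg: "0 \<le> yy s x"
  using pathw_marg[of s x, symmetric] pathw_nn by (auto intro: sum_nonneg)

lemma Xmeas[measurable]: "X n a s \<in> measurable M (count_space UNIV)"
  using sw unfolding is_foraging_swarm_def by blast

lemma Ev_sets: "{\<omega> \<in> space M. \<forall>a<n. \<forall>s\<le>t. X n a s \<omega> = h a s} \<in> sets M"
  by measurable

lemma Ev_meas: "measure M {\<omega> \<in> space M. \<forall>a<n. \<forall>s\<le>t. X n a s \<omega> = h a s} = path_prob E S T r lam \<rho> \<epsilon> n t h"
  using sw unfolding is_foraging_swarm_def by blast

lemma meas_event:
  assumes cong: "\<And>h h'. (\<And>a s. a < n \<Longrightarrow> s \<le> t \<Longrightarrow> h a s = h' a s) \<Longrightarrow> Pr h = Pr h'"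
  shows "{\<omega> \<in> space M. Pr (\<lambda>a s. X n a s \<omega>)} \<in> sets M"
    and "measure M {\<omega> \<in> space M. Pr (\<lambda>a s. X n a s \<omega>)}
       = (\<Sum>h\<in>{h \<in> PiE {..<n} (\<lambda>_. PiE {..t} (\<lambda>_. UNIV)). Pr h}. path_prob E S T r lam \<rho> \<epsilon> n t h)"
proof -
  interpret prob_space M by (rule PS)
  define H where "H = {h \<in> PiE {..<n} (\<lambda>_. PiE {..t} (\<lambda>_. UNIV :: 'v st set)). Pr h}"
  define Ev where "Ev h = {\<omega> \<in> space M. \<forall>a<n. \<forall>s\<le>t. X n a s \<omega> = h a s}" for h
  have "finite (PiE {..<n} (\<lambda>_. PiE {..t} (\<lambda>_. UNIV :: 'v st set)))" by (intro finite_PiE) auto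
  then have finH: "finite H" unfolding H_def by (rule finite_subset[rotated]) auto
  have eq: "{\<omega> \<in> space M. Pr (\<lambda>a s. X n a s \<omega>)} = (\<Union>h\<in>H. Ev h)"
  proof (intro equalityI subsetI)
    fix \<omega> assume w: "\<omega> \<in> {\<omega> \<in> space M. Pr (\<lambda>a s. X n a s \<omega>)}"
    define rh where "rh = (\<lambda>a\<in>{..<n}. \<lambda>s\<in>{..t}. X n a s \<omega>)"
    have "Pr rh" using w cong[of rh "\<lambda>a s. X n a s \<omega>"] by (simp add: rh_def)
    then have "rh \<in> H" unfolding H_def rh_def by auto
    moreover have "\<omega> \<in> Ev rh" using w unfolding Ev_def rh_def by auto
    ultimately show "\<omega> \<in> (\<Union>h\<in>H. Ev h)" by blast
  next
    fix \<omega> assume "\<omega> \<in> (\<Union>h\<in>H. Ev h)"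
    then obtain h where h: "h \<in> H" "\<omega> \<in> Ev h" by blast
    then have "Pr (\<lambda>a s. X n a s \<omega>)" using cong[of h "\<lambda>a s. X n a s \<omega>"] unfolding H_def Ev_def by auto
    then show "\<omega> \<in> {\<omega> \<in> space M. Pr (\<lambda>a s. X n a s \<omega>)}" using h unfolding Ev_def by auto
  qed
  have sets: "Ev ` H \<subseteq> sets M" unfolding Ev_def using Ev_sets by auto
  show "{\<omega> \<in> space M. Pr (\<lambda>a s. X n a s \<omega>)} \<in> sets M"
    unfolding eq using sets finH by auto
  have disj: "disjoint_family_on Ev H"
  unfolding disjoint_family_on_def
  proof (intro ballI impI)
    fix h h' assume hh: "h \<in> H" "h' \<in> H" "h \<noteq> h'"
    show "Ev h \<inter> Ev h' = {}"
    proof (rule ccontr)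
      assume "Ev h \<inter> Ev h' \<noteq> {}"
      then obtain \<omega> where "\<omega> \<in> Ev h" "\<omega> \<in> Ev h'" by blast
      then have agree: "\<forall>a<n. \<forall>s\<le>t. h a s = h' a s" unfolding Ev_def by auto
      have "h = h'"
      proof (intro ext)
        fix a s
        show "h a s = h' a s"
          using hh(1,2) agree unfolding H_def by (cases "a < n"; cases "s \<le> t") (auto simp: PiE_def extensional_def Pi_def)
      qed
      then show False using hh(3) by simp
    qed
  qed
  have "measure M (\<Union>h\<in>H. Ev h) = (\<Sum>h\<in>H. measure M (Ev h))"
    by (rule finite_measure_finite_Union[OF finH sets disj])
  also have "\<dots> = (\<Sum>h\<in>H. path_prob E S T r lam \<rho> \<epsilon> n t h)"
    unfolding Ev_def by (simp add: Ev_meas)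
  finally show "measure M {\<omega> \<in> space M. Pr (\<lambda>a s. X n a s \<omega>)}
       = (\<Sum>h\<in>{h \<in> PiE {..<n} (\<lambda>_. PiE {..t} (\<lambda>_. UNIV)). Pr h}. path_prob E S T r lam \<rho> \<epsilon> n t h)"
    unfolding eq H_def .
qed

lemma path_prob_eq:
  assumes "\<And>s x. s < s0 \<Longrightarrow> sgn (qemp n h s x) = sgn (yy s x)"
  shows "path_prob E S T r lam \<rho> \<epsilon> n s0 h = (\<Prod>a<n. pathw KK (S, C1) s0 (h a))"
proof -
  have w: "wtraj E S T r lam \<rho> (qemp n h) s = snd (mf E S T r lam \<rho> \<epsilon> s)" if "s < s0" for s
    unfolding mw_wtraj by (rule wtraj_cong) (use assms that in auto)
  show ?thesis unfolding path_prob_def pathw_def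
    by (intro prod.cong refl arg_cong2[where f="(*)"]) (simp add: w)
qed

lemma badx_bound:
  fixes \<delta> :: real
  assumes d: "0 < \<delta>" "\<delta> \<le> 1" and yb: "0 < yy s0 x \<Longrightarrow> \<delta> \<le> yy s0 x"
  shows "(\<Sum>h\<in>PiE {..<n} (\<lambda>_. PiE {..s0} (\<lambda>_. UNIV)). (\<Prod>a<n. pathw KK (S, C1) s0 (h a)) *
      (if \<not> (\<bar>qemp n h s0 x - yy s0 x\<bar> < \<delta> \<and> sgn (qemp n h s0 x) = sgn (yy s0 x)) then 1 else 0))
    \<le> 2 * exp (- \<delta>\<^sup>2 / 4) ^ n"
proof (cases "0 < yy s0 x")
  case True
  have "(\<Sum>h\<in>PiE {..<n} (\<lambda>_. PiE {..s0} (\<lambda>_. UNIV)). (\<Prod>a<n. pathw KK (S, C1) s0 (h a)) *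
      (if \<not> (\<bar>qemp n h s0 x - yy s0 x\<bar> < \<delta> \<and> sgn (qemp n h s0 x) = sgn (yy s0 x)) then 1 else 0))
    \<le> (\<Sum>h\<in>PiE {..<n} (\<lambda>_. PiE {..s0} (\<lambda>_. UNIV)). (\<Prod>a<n. pathw KK (S, C1) s0 (h a)) *
      (if \<delta> \<le> \<bar>real (card {a. a < n \<and> h a s0 = x}) / real n - 
          (\<Sum>p\<in>PiE {..s0} (\<lambda>_. UNIV). pathw KK (S, C1) s0 p * (if p s0 = x then 1 else 0))\<bar> then 1 else 0))"
  proof (rule sum_mono)
    fix h assume h: "h \<in> PiE {..<n} (\<lambda>_. PiE {..s0} (\<lambda>_. UNIV :: 'v st set))"
    have pn: "0 \<le> (\<Prod>a<n. pathw KK (S, C1) s0 (h a))" by (intro prod_nonneg pathw_nn)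
    have q0: "0 \<le> qemp n h s0 x" unfolding qemp_def by simp
    have "\<not> (\<bar>qemp n h s0 x - yy s0 x\<bar> < \<delta> \<and> sgn (qemp n h s0 x) = sgn (yy s0 x)) \<Longrightarrow> \<delta> \<le> \<bar>qemp n h s0 x - yy s0 x\<bar>"
    proof -
      assume nb: "\<not> (\<bar>qemp n h s0 x - yy s0 x\<bar> < \<delta> \<and> sgn (qemp n h s0 x) = sgn (yy s0 x))"
      show "\<delta> \<le> \<bar>qemp n h s0 x - yy s0 x\<bar>"
      proof (cases "sgn (qemp n h s0 x) = sgn (yy s0 x)")
        case True then show ?thesis using nb by simp
      next
        case False
        then have "qemp n h s0 x = 0" using q0 \<open>0 < yy s0 x\<close> by (auto simp: sgn_if split: if_splits)
        then show ?thesis using yb \<open>0 < yy s0 x\<close> by simp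
      qed
    qed
    then have "(if \<not> (\<bar>qemp n h s0 x - yy s0 x\<bar> < \<delta> \<and> sgn (qemp n h s0 x) = sgn (yy s0 x)) then 1 else 0)
      \<le> (if \<delta> \<le> \<bar>real (card {a. a < n \<and> h a s0 = x}) / real n - 
          (\<Sum>p\<in>PiE {..s0} (\<lambda>_. UNIV). pathw KK (S, C1) s0 p * (if p s0 = x then 1 else 0))\<bar> then 1 else (0::real))"
      by (simp add: pathw_marg qemp_def)
    then show "(\<Prod>a<n. pathw KK (S, C1) s0 (h a)) *
      (if \<not> (\<bar>qemp n h s0 x - yy s0 x\<bar> < \<delta> \<and> sgn (qemp n h s0 x) = sgn (yy s0 x)) then 1 else 0)
      \<le> (\<Prod>a<n. pathw KK (S, C1) s0 (h a)) *
      (if \<delta> \<le> \<bar>real (card {a. a < n \<and> h a s0 = x}) / real n - 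
          (\<Sum>p\<in>PiE {..s0} (\<lambda>_. UNIV). pathw KK (S, C1) s0 p * (if p s0 = x then 1 else 0))\<bar> then 1 else 0)"
      by (rule mult_left_mono[OF _ pn])
  qed
  also have "\<dots> \<le> 2 * exp (- \<delta>\<^sup>2 / 4) ^ n"
    by (rule deviation[where A="\<lambda>p. p s0 = x"]) (auto intro: finite_PiE pathw_nn pathw_sum1 d)
  finally show ?thesis .
next
  case False
  then have y0: "yy s0 x = 0" using yy_nonneg[of s0 x] by simp
  have zero: "pathw KK (S, C1) s0 p = 0" if "p \<in> PiE {..s0} (\<lambda>_. UNIV)" "p s0 = x" for p
  proof -
    have "(\<Sum>p\<in>PiE {..s0} (\<lambda>_. UNIV). pathw KK (S, C1) s0 p * (if p s0 = x then 1 else 0)) = 0"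
      using pathw_marg[of s0 x] y0 by simp
    then have "\<forall>p\<in>PiE {..s0} (\<lambda>_. UNIV). pathw KK (S, C1) s0 p * (if p s0 = x then 1 else 0) = 0"
      by (subst (asm) sum_nonneg_eq_0_iff) (auto intro: finite_PiE pathw_nn)
    then show ?thesis using that by auto
  qed
  have "(\<Sum>h\<in>PiE {..<n} (\<lambda>_. PiE {..s0} (\<lambda>_. UNIV)). (\<Prod>a<n. pathw KK (S, C1) s0 (h a)) *
      (if \<not> (\<bar>qemp n h s0 x - yy s0 x\<bar> < \<delta> \<and> sgn (qemp n h s0 x) = sgn (yy s0 x)) then 1 else 0)) = 0"
  proof (rule sum.neutral, rule ballI)
    fix h assume h: "h \<in> PiE {..<n} (\<lambda>_. PiE {..s0} (\<lambda>_. UNIV :: 'v st set))"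
    show "(\<Prod>a<n. pathw KK (S, C1) s0 (h a)) *
      (if \<not> (\<bar>qemp n h s0 x - yy s0 x\<bar> < \<delta> \<and> sgn (qemp n h s0 x) = sgn (yy s0 x)) then 1 else 0) = 0"
    proof (cases "\<exists>a<n. h a s0 = x")
      case True
      then obtain a where a: "a < n" "h a s0 = x" by blast
      then have "pathw KK (S, C1) s0 (h a) = 0" using h zero by auto
      then have "(\<Prod>a<n. pathw KK (S, C1) s0 (h a)) = 0" using a by (auto intro: prod_zero)
      then show ?thesis by simp
    next
      case False
      then have "{a. a < n \<and> h a s0 = x} = {}" by auto
      then have "qemp n h s0 x = 0" by (simp add: qemp_def)
      then show ?thesis using y0 d by simp
    qed
  qed
  then show ?thesis by simp
qed

lemma F_bound:
  fixes \<delta> :: real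
  assumes d: "0 < \<delta>" "\<delta> \<le> 1" and yb: "\<And>x. 0 < yy s0 x \<Longrightarrow> \<delta> \<le> yy s0 x"
  shows "{\<omega> \<in> space M. (\<forall>s<s0. Gd yy n \<delta> s (\<lambda>a s. X n a s \<omega>)) \<and> \<not> Gd yy n \<delta> s0 (\<lambda>a s. X n a s \<omega>)} \<in> sets M"
    and "measure M {\<omega> \<in> space M. (\<forall>s<s0. Gd yy n \<delta> s (\<lambda>a s. X n a s \<omega>)) \<and> \<not> Gd yy n \<delta> s0 (\<lambda>a s. X n a s \<omega>)}
      \<le> real CARD('v st) * (2 * exp (- \<delta>\<^sup>2 / 4) ^ n)"
proof -
  let ?Pr = "\<lambda>h. (\<forall>s<s0. Gd yy n \<delta> s h) \<and> \<not> Gd yy n \<delta> s0 h"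
  let ?H = "PiE {..<n} (\<lambda>_. PiE {..s0} (\<lambda>_. UNIV :: 'v st set))"
  let ?Q = "\<lambda>h. (\<Prod>a<n. pathw KK (S, C1) s0 (h a))"
  let ?bad = "\<lambda>h x. \<not> (\<bar>qemp n h s0 x - yy s0 x\<bar> < \<delta> \<and> sgn (qemp n h s0 x) = sgn (yy s0 x))"
  have cong: "?Pr h = ?Pr h'" if "\<And>a s. a < n \<Longrightarrow> s \<le> s0 \<Longrightarrow> h a s = h' a s" for h h'
  proof -
    have "Gd yy n \<delta> s h = Gd yy n \<delta> s h'" if "s \<le> s0" for s
      by (rule Gd_cong) (use that \<open>\<And>a s. a < n \<Longrightarrow> s \<le> s0 \<Longrightarrow> h a s = h' a s\<close> in auto)
    then show ?thesis by auto
  qed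
  show "{\<omega> \<in> space M. ?Pr (\<lambda>a s. X n a s \<omega>)} \<in> sets M"
    by (rule meas_event(1)) (rule cong)
  have finH: "finite ?H" by (intro finite_PiE) auto
  have "measure M {\<omega> \<in> space M. ?Pr (\<lambda>a s. X n a s \<omega>)} = (\<Sum>h\<in>{h\<in>?H. ?Pr h}. path_prob E S T r lam \<rho> \<epsilon> n s0 h)"
    by (rule meas_event(2)) (rule cong)
  also have "\<dots> = (\<Sum>h\<in>?H. if ?Pr h then path_prob E S T r lam \<rho> \<epsilon> n s0 h else 0)"
    by (rule sum.inter_filter[OF finH])
  also have "\<dots> \<le> (\<Sum>h\<in>?H. ?Q h * (\<Sum>x\<in>UNIV. if ?bad h x then 1 else 0))"
  proof (rule sum_mono)
    fix h assume h: "h \<in> ?H"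
    have pn: "0 \<le> ?Q h" by (intro prod_nonneg pathw_nn)
    show "(if ?Pr h then path_prob E S T r lam \<rho> \<epsilon> n s0 h else 0) \<le> ?Q h * (\<Sum>x\<in>UNIV. if ?bad h x then 1 else 0)"
    proof (cases "?Pr h")
      case True
      then have pp: "path_prob E S T r lam \<rho> \<epsilon> n s0 h = ?Q h"
        by (intro path_prob_eq) (auto simp: Gd_def)
      from True obtain x where x: "?bad h x" unfolding Gd_def by blast
      have "1 \<le> (\<Sum>x\<in>UNIV. if ?bad h x then 1 else (0::real))"
        using member_le_sum[of x UNIV "\<lambda>x. if ?bad h x then 1 else (0::real)"] x by simp
      then have "?Q h * 1 \<le> ?Q h * (\<Sum>x\<in>UNIV. if ?bad h x then 1 else 0)"
        by (rule mult_left_mono[OF _ pn])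
      then show ?thesis using True pp by simp
    next
      case False
      have s0: "0 \<le> (\<Sum>x\<in>UNIV. if ?bad h x then 1 else (0::real))" by (rule sum_nonneg) simp
      have e: "(if ?Pr h then path_prob E S T r lam \<rho> \<epsilon> n s0 h else 0) = 0" by (rule if_not_P[OF False])
      show ?thesis unfolding e by (rule mult_nonneg_nonneg[OF pn s0])
    qed
  qed
  also have "\<dots> = (\<Sum>x\<in>UNIV. \<Sum>h\<in>?H. ?Q h * (if ?bad h x then 1 else 0))"
    by (simp add: sum_distrib_left) (rule sum.swap)
  also have "\<dots> \<le> (\<Sum>x\<in>(UNIV :: 'v st set). 2 * exp (- \<delta>\<^sup>2 / 4) ^ n)"
    by (rule sum_mono) (rule badx_bound[OF d yb])
  also have "\<dots> = real CARD('v st) * (2 * exp (- \<delta>\<^sup>2 / 4) ^ n)" by simp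
  finally show "measure M {\<omega> \<in> space M. ?Pr (\<lambda>a s. X n a s \<omega>)} \<le> real CARD('v st) * (2 * exp (- \<delta>\<^sup>2 / 4) ^ n)" .
qed

lemma Bad_bound:
  fixes \<delta> :: real
  assumes d: "0 < \<delta>" "\<delta> \<le> 1" and yb: "\<And>s x. s \<le> t \<Longrightarrow> 0 < yy s x \<Longrightarrow> \<delta> \<le> yy s x"
  shows "{\<omega> \<in> space M. \<not> (\<forall>s\<le>t. Gd yy n \<delta> s (\<lambda>a s. X n a s \<omega>))} \<in> sets M"
    and "measure M {\<omega> \<in> space M. \<not> (\<forall>s\<le>t. Gd yy n \<delta> s (\<lambda>a s. X n a s \<omega>))}
      \<le> real (Suc t) * (real CARD('v st) * (2 * exp (- \<delta>\<^sup>2 / 4) ^ n))"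
proof -
  interpret prob_space M by (rule PS)
  let ?F = "\<lambda>s0. {\<omega> \<in> space M. (\<forall>s<s0. Gd yy n \<delta> s (\<lambda>a s. X n a s \<omega>)) \<and> \<not> Gd yy n \<delta> s0 (\<lambda>a s. X n a s \<omega>)}"
  let ?B = "{\<omega> \<in> space M. \<not> (\<forall>s\<le>t. Gd yy n \<delta> s (\<lambda>a s. X n a s \<omega>))}"
  have Fs: "?F s0 \<in> sets M" if "s0 \<le> t" for s0
    by (rule F_bound(1)[OF d]) (use yb that in auto)
  have sub: "?B \<subseteq> (\<Union>s0\<in>{..t}. ?F s0)"
  proof
    fix \<omega> assume w: "\<omega> \<in> ?B"
    let ?P = "\<lambda>s. s \<le> t \<and> \<not> Gd yy n \<delta> s (\<lambda>a s. X n a s \<omega>)"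
    have ex: "\<exists>s. ?P s" using w by auto
    define s0 where "s0 = (LEAST s. ?P s)"
    have s0a: "?P s0" unfolding s0_def by (rule LeastI_ex[OF ex])
    have s0b: "\<forall>m<s0. \<not> ?P m"
    proof (intro allI impI)
      fix m assume "m < s0"
      then show "\<not> ?P m" unfolding s0_def by (rule not_less_Least)
    qed
    note s0 = s0a s0b
    then have "\<forall>s<s0. Gd yy n \<delta> s (\<lambda>a s. X n a s \<omega>)" by auto
    then show "\<omega> \<in> (\<Union>s0\<in>{..t}. ?F s0)" using s0 w by auto
  qed
  have cong: "(\<not> (\<forall>s\<le>t. Gd yy n \<delta> s h)) = (\<not> (\<forall>s\<le>t. Gd yy n \<delta> s h'))"
    if "\<And>a s. a < n \<Longrightarrow> s \<le> t \<Longrightarrow> h a s = h' a s" for h h'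
  proof -
    have "Gd yy n \<delta> s h = Gd yy n \<delta> s h'" if "s \<le> t" for s
      by (rule Gd_cong) (use that \<open>\<And>a s. a < n \<Longrightarrow> s \<le> t \<Longrightarrow> h a s = h' a s\<close> in auto)
    then show ?thesis by auto
  qed
  show "?B \<in> sets M" by (rule meas_event(1)) (rule cong)
  have Fs': "?F ` {..t} \<subseteq> sets M" using Fs by blast
  have Us: "(\<Union>s0\<in>{..t}. ?F s0) \<in> sets M" using Fs' by (intro sets.finite_UN) auto
  have "measure M ?B \<le> measure M (\<Union>s0\<in>{..t}. ?F s0)"
    by (rule finite_measure_mono[OF sub Us])
  also have "\<dots> \<le> (\<Sum>s0\<in>{..t}. measure M (?F s0))"
    by (rule finite_measure_subadditive_finite[OF _ Fs']) simp
  also have "\<dots> \<le> (\<Sum>s0\<in>{..t}. real CARD('v st) * (2 * exp (- \<delta>\<^sup>2 / 4) ^ n))"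
    by (rule sum_mono) (rule F_bound(2)[OF d], use yb in auto)
  also have "\<dots> = real (Suc t) * (real CARD('v st) * (2 * exp (- \<delta>\<^sup>2 / 4) ^ n))" by simp
  finally show "measure M ?B \<le> real (Suc t) * (real CARD('v st) * (2 * exp (- \<delta>\<^sup>2 / 4) ^ n))" .
qed

lemma AE_delta:
  fixes \<delta> :: real
  assumes d: "0 < \<delta>" "\<delta> \<le> 1" and yb: "\<And>s x. s \<le> t \<Longrightarrow> 0 < yy s x \<Longrightarrow> \<delta> \<le> yy s x"
  shows "AE \<omega> in M. eventually (\<lambda>n. \<forall>s\<le>t. \<forall>x. \<bar>qhat X n s \<omega> x - yy s x\<bar> < \<delta>) sequentially"
proof -
  interpret prob_space M by (rule PS)
  define B where "B n = {\<omega> \<in> space M. \<not> (\<forall>s\<le>t. Gd yy n \<delta> s (\<lambda>a s. X n a s \<omega>))}" for n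
  define C where "C = real (Suc t) * (real CARD('v st) * 2)"
  have Bs: "B n \<in> sets M" for n unfolding B_def by (rule Bad_bound(1)[OF d yb])
  have Bm: "measure M (B n) \<le> C * exp (- \<delta>\<^sup>2 / 4) ^ n" for n
    unfolding B_def C_def using Bad_bound(2)[where t=t and n=n, OF d yb] by (simp only: mult.assoc)
  have "summable (\<lambda>n. C * exp (- \<delta>\<^sup>2 / 4) ^ n)"
    by (rule summable_mult, rule summable_geometric) (use d in simp)
  then have sm: "summable (\<lambda>n. measure M (B n))"
    by (rule summable_comparison_test'[where N=0]) (use Bm in simp)
  have bc: "AE \<omega> in M. eventually (\<lambda>n. \<omega> \<in> space M - B n) sequentially"
    by (rule borel_cantelli_AE1[OF Bs _ sm]) (simp add: less_top[symmetric])
  show ?thesis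
  proof (rule AE_mp[OF bc], rule AE_I2, rule impI)
    fix \<omega> assume "\<omega> \<in> space M" and ev: "eventually (\<lambda>n. \<omega> \<in> space M - B n) sequentially"
    show "eventually (\<lambda>n. \<forall>s\<le>t. \<forall>x. \<bar>qhat X n s \<omega> x - yy s x\<bar> < \<delta>) sequentially"
      using ev by (rule eventually_mono) (auto simp: B_def Gd_def qhat_def)
  qed
qed

end


theorem theorem4:
  fixes E :: "'v::finite \<Rightarrow> 'v \<Rightarrow> bool" and S T :: 'v
    and r lam \<rho> \<epsilon> :: real
    and M :: "'a measure" and X :: "nat \<Rightarrow> nat \<Rightarrow> nat \<Rightarrow> 'a \<Rightarrow> 'v st"
  assumes "sym_graph E" and "graph_connected E" and "has_odd_cycle E"
    and "S \<noteq> T" and "\<not> E S T"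
    and "0 < \<rho>" and "\<rho> < 1" and "0 < \<epsilon>" and "\<epsilon> < 1" and "0 < lam" and "lam < 1" and "0 < r"
    and "prob_space M"
    and "is_foraging_swarm M E S T r lam \<rho> \<epsilon> X"
  shows "\<forall>t. AE \<omega> in M. \<forall>s\<le>t. \<forall>x.
           (\<lambda>n. qhat X n s \<omega> x) \<longlonglongrightarrow> mf_y E S T r lam \<rho> \<epsilon> s x"
proof
  fix t
  let ?y = "mf_y E S T r lam \<rho> \<epsilon>"
  define Y where "Y = (\<lambda>(s, x). ?y s x) ` {(s, x). s \<le> t \<and> 0 < ?y s x}"
  define d0 where "d0 = Min (insert 1 Y)"
  have finY: "finite Y"
  proof -
    have "{(s, x). s \<le> t \<and> 0 < ?y s x} \<subseteq> {..t} \<times> UNIV" by auto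
    then have "finite {(s, x). s \<le> t \<and> 0 < ?y s x}" by (rule finite_subset) auto
    then show ?thesis unfolding Y_def by simp
  qed
  have d0pos: "0 < d0" unfolding d0_def using finY by (auto simp: Y_def)
  have d0le: "d0 \<le> 1" unfolding d0_def using finY by simp
  have d0y: "d0 \<le> ?y s x" if "s \<le> t" "0 < ?y s x" for s x
  proof -
    have "?y s x \<in> Y" unfolding Y_def using that by force
    then show ?thesis unfolding d0_def using finY by simp
  qed
  have "\<forall>k::nat. AE \<omega> in M. eventually (\<lambda>n. \<forall>s\<le>t. \<forall>x. \<bar>qhat X n s \<omega> x - ?y s x\<bar> < d0 / real (Suc k)) sequentially"
  proof
    fix k :: nat
    have dk: "0 < d0 / real (Suc k)" "d0 / real (Suc k) \<le> 1" "d0 / real (Suc k) \<le> d0"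
      using d0pos d0le by (auto simp: field_simps)
    show "AE \<omega> in M. eventually (\<lambda>n. \<forall>s\<le>t. \<forall>x. \<bar>qhat X n s \<omega> x - ?y s x\<bar> < d0 / real (Suc k)) sequentially"
      by (rule AE_delta[OF assms(2,4,8,9,13,14) dk(1,2)]) (use dk(3) d0y in force)
  qed
  then have "AE \<omega> in M. \<forall>k::nat. eventually (\<lambda>n. \<forall>s\<le>t. \<forall>x. \<bar>qhat X n s \<omega> x - ?y s x\<bar> < d0 / real (Suc k)) sequentially"
    by (simp add: AE_all_countable)
  then show "AE \<omega> in M. \<forall>s\<le>t. \<forall>x. (\<lambda>n. qhat X n s \<omega> x) \<longlonglongrightarrow> ?y s x"
  proof (rule AE_mp, intro AE_I2 impI)
    fix \<omega> assume H: "\<forall>k::nat. eventually (\<lambda>n. \<forall>s\<le>t. \<forall>x. \<bar>qhat X n s \<omega> x - ?y s x\<bar> < d0 / real (Suc k)) sequentially"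
    show "\<forall>s\<le>t. \<forall>x. (\<lambda>n. qhat X n s \<omega> x) \<longlonglongrightarrow> ?y s x"
    proof (intro allI impI)
      fix s x assume st: "s \<le> t"
      show "(\<lambda>n. qhat X n s \<omega> x) \<longlonglongrightarrow> ?y s x"
        unfolding LIMSEQ_iff
      proof (intro allI impI)
        fix e :: real assume e: "0 < e"
        obtain k where k: "inverse (real (Suc k)) < e" using reals_Archimedean[OF e] by blast
        have "d0 / real (Suc k) \<le> inverse (real (Suc k))"
          using d0le by (simp add: divide_inverse mult_left_le_one_le)
        then have ke: "d0 / real (Suc k) < e" using k by linarith
        from H[rule_format, of k] obtain N where N: "\<And>n. n \<ge> N \<Longrightarrow> \<forall>s\<le>t. \<forall>x. \<bar>qhat X n s \<omega> x - ?y s x\<bar> < d0 / real (Suc k)"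
          unfolding eventually_sequentially by blast
        have "\<forall>n\<ge>N. norm (qhat X n s \<omega> x - ?y s x) < e"
        proof (intro allI impI)
          fix n assume "N \<le> n"
          then have "\<bar>qhat X n s \<omega> x - ?y s x\<bar> < d0 / real (Suc k)" using N st by blast
          then show "norm (qhat X n s \<omega> x - ?y s x) < e" using ke by simp
        qed
        then show "\<exists>no. \<forall>n\<ge>no. norm (qhat X n s \<omega> x - ?y s x) < e" by blast
      qed
    qed
  qed
qed

end
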